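(* There exist compact metric dynamical systems $(Y,g)$ and $(X,f)$, both transitive, and a factor map $\pi\colon (Y,g)\to (X,f)$ such that $(X,f)$ is Li-Yorke chaotic while $(Y,g)$ is not Li-Yorke chaotic. In other words, Li-Yorke chaos is not preserved under extensions.
   Context: A (topological) dynamical system $(X,f)$ consists of a compact metric space $(X,d)$ and a continuous map $f\colon X\to X$. A factor map from $(Y,g)$ to $(X,f)$ is a continuous surjection $\pi\colon Y\to X$ with $\pi\circ g=f\circ\pi$; then $(Y,g)$ is called an extension of $(X,f)$. The system $(X,f)$ is transitive if for any two non-empty open sets $U,V\subseteq X$ there is an integer $n>0$ with $U\cap f^{-n}V\neq\emptyset$. A subset $S\subseteq X$ with at least two points is a scrambled set if for all $x,y\in S$ with $x\neq y$ one has $\liminf_{n\to\infty} d(f^n(x),f^n(y))=0$ and $\limsup_{n\to\infty} d(f^n(x),f^n(y))>0$. The system $(X,f)$ is Li-Yorke chaotic if it has an uncountable scrambled set. *)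

theory Defs
  imports "HOL-Analysis.Analysis"
begin

definition dyn_system :: "'a::metric_space set \<Rightarrow> ('a \<Rightarrow> 'a) \<Rightarrow> bool" where
  "dyn_system X f \<longleftrightarrow> compact X \<and> continuous_on X f \<and> f ` X \<subseteq> X"

definition factor_map :: "'a::metric_space set \<Rightarrow> ('a \<Rightarrow> 'a) \<Rightarrow> 'b::metric_space set \<Rightarrow> ('b \<Rightarrow> 'b) \<Rightarrow> ('a \<Rightarrow> 'b) \<Rightarrow> bool" where
  "factor_map Y g X f \<phi> \<longleftrightarrow> continuous_on Y \<phi> \<and> \<phi> ` Y = X \<and> (\<forall>y\<in>Y. \<phi> (g y) = f (\<phi> y))"

definition transitive_sys :: "'a::metric_space set \<Rightarrow> ('a \<Rightarrow> 'a) \<Rightarrow> bool" where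
  "transitive_sys X f \<longleftrightarrow>
     (\<forall>U V. openin (top_of_set X) U \<and> openin (top_of_set X) V \<and> U \<noteq> {} \<and> V \<noteq> {} \<longrightarrow>
        (\<exists>n>0. {x\<in>U. (f ^^ n) x \<in> V} \<noteq> {}))"

definition scrambled :: "'a::metric_space set \<Rightarrow> ('a \<Rightarrow> 'a) \<Rightarrow> 'a set \<Rightarrow> bool" where
  "scrambled X f S \<longleftrightarrow> S \<subseteq> X \<and> (\<exists>x y. x \<in> S \<and> y \<in> S \<and> x \<noteq> y) \<and>
     (\<forall>x\<in>S. \<forall>y\<in>S. x \<noteq> y \<longrightarrow>
        liminf (\<lambda>n. ereal (dist ((f ^^ n) x) ((f ^^ n) y))) = 0 \<and>
        limsup (\<lambda>n. ereal (dist ((f ^^ n) x) ((f ^^ n) y))) > 0)"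

definition li_yorke_chaotic :: "'a::metric_space set \<Rightarrow> ('a \<Rightarrow> 'a) \<Rightarrow> bool" where
  "li_yorke_chaotic X f \<longleftrightarrow> (\<exists>S. scrambled X f S \<and> uncountable S)"

end

theory Submission
  imports Defs
begin

definition add1 :: "(nat \<Rightarrow> bool) \<Rightarrow> nat \<Rightarrow> bool" where
  "add1 d j = (d j \<noteq> (\<forall>i<j. d i))"

definition padd :: "(nat \<Rightarrow> bool) \<Rightarrow> nat \<Rightarrow> nat \<Rightarrow> bool" where
  "padd d n = (add1 ^^ n) d"

definition val :: "nat \<Rightarrow> (nat \<Rightarrow> bool) \<Rightarrow> nat" where
  "val M d = (\<Sum>j<M. if d j then 2^j else 0)"

lemma val_0 [simp]: "val 0 d = 0"
  by (simp add: val_def)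

lemma val_Suc: "val (Suc M) d = val M d + 2^M * (if d M then 1 else 0)"
  by (simp add: val_def)

lemma val_less: "val M d < 2^M"
proof (induction M)
  case 0 then show ?case by simp
next
  case (Suc M) then show ?case by (simp add: val_Suc)
qed

lemma val_all: "(\<forall>i<M. d i) \<longleftrightarrow> val M d + 1 = 2^M"
proof (induction M)
  case 0 then show ?case by simp
next
  case (Suc M)
  have l: "val M d < 2^M" by (rule val_less)
  have "(\<forall>i<Suc M. d i) \<longleftrightarrow> (\<forall>i<M. d i) \<and> d M" using less_Suc_eq by auto
  also have "\<dots> \<longleftrightarrow> val (Suc M) d + 1 = 2^Suc M"
    using Suc l by (auto simp: val_Suc)
  finally show ?case .
qed

lemma val_add1: "val M (add1 d) = (val M d + 1) mod 2^M"
proof (induction M)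
  case 0 then show ?case by simp
next
  case (Suc M)
  have l: "val M d < 2^M" by (rule val_less)
  show ?case
  proof (cases "\<forall>i<M. d i")
    case True
    then have e: "val M d + 1 = 2^M" using val_all by blast
    have a: "add1 d M = (\<not> d M)" using True by (simp add: add1_def)
    have e2: "val M d + 2^M + 1 = 2^Suc M" using e by simp
    show ?thesis
    proof (cases "d M")
      case True
      have l1: "val (Suc M) (add1 d) = 0" using Suc.IH e a True by (simp add: val_Suc)
      have l2: "val (Suc M) d + 1 = 2^Suc M" using e True by (simp add: val_Suc)
      show ?thesis using l1 l2 by simp
    next
      case False
      then show ?thesis using Suc e a by (simp add: val_Suc)
    qed
  next
    case False
    then have e: "val M d + 1 < 2^M" using val_all[of M d] l by auto
    have a: "add1 d M = d M" using False by (auto simp: add1_def)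
    have "val M d + 1 + 2^M * (if d M then 1 else 0) < 2^Suc M" using e by auto
    then show ?thesis using Suc e a by (auto simp: val_Suc)
  qed
qed

lemma padd_0 [simp]: "padd d 0 = d" by (simp add: padd_def)
lemma padd_Suc: "padd d (Suc n) = add1 (padd d n)" by (simp add: padd_def)

lemma val_padd: "val M (padd d n) = (val M d + n) mod 2^M"
proof (induction n)
  case 0 then show ?case by (simp add: val_less)
next
  case (Suc n) then show ?case by (simp add: padd_Suc val_add1 mod_Suc_eq)
qed

lemma bit_add_pow:
  fixes a b :: nat
  assumes "a < 2^M"
  shows "bit (a + 2^M * b) j = (if j < M then bit a j else bit b (j - M))"
proof (cases "j < M")
  case True
  have eq: "(2::nat)^M = 2^j * 2^(M-j)" using True by (simp add: power_add[symmetric])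
  have h: "a + 2^M * b = a + 2^(M-j) * b * 2^j" by (simp add: eq ac_simps)
  have "(a + 2^M * b) div 2^j = (a + 2^(M-j) * b * 2^j) div 2^j" by (simp only: h)
  also have "\<dots> = a div 2^j + 2^(M-j) * b" by simp
  finally have "(a + 2^M * b) div 2^j = a div 2^j + 2^(M-j) * b" .
  moreover have "even (2^(M-j) * b :: nat)" using True by simp
  ultimately show ?thesis using True by (simp add: bit_iff_odd)
next
  case False
  have "(a + 2^M * b) div 2^M = b" using assms by simp
  then have "(a + 2^M * b) div 2^j = b div 2^(j - M)"
    using False by (metis (no_types) div_exp_eq le_add_diff_inverse not_less)
  then show ?thesis using False by (simp add: bit_iff_odd)
qed

lemma bit_val: "j < M \<Longrightarrow> bit (val M d) j = d j"
proof (induction M)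
  case 0 then show ?case by simp
next
  case (Suc M)
  define c :: nat where "c = (if d M then 1 else 0)"
  have "bit (val M d + 2^M * c) j = (if j < M then bit (val M d) j else bit c (j - M))"
    using val_less by (rule bit_add_pow)
  moreover have "val (Suc M) d = val M d + 2^M * c" by (simp add: val_Suc c_def)
  ultimately have key: "bit (val (Suc M) d) j = (if j < M then bit (val M d) j else bit c (j - M))" by simp
  show ?case
  proof (cases "j < M")
    case True then show ?thesis using key Suc by simp
  next
    case False
    then have "j = M" using Suc.prems by simp
    then show ?thesis using key by (simp add: c_def bit_0)
  qed
qed

lemma padd_bit: "j < M \<Longrightarrow> padd d n j = bit (val M d + n) j"
proof -
  assume j: "j < M"
  have "padd d n j = bit (val M (padd d n)) j" using bit_val[OF j] by simp
  also have "\<dots> = bit ((val M d + n) mod 2^M) j" by (simp add: val_padd)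
  also have "\<dots> = bit (val M d + n) j" using j by (simp add: take_bit_eq_mod[symmetric] bit_take_bit_iff)
  finally show ?thesis .
qed

lemma val_split: "val (m + k) d = val m d + 2^m * val k (\<lambda>j. d (m + j))"
proof (induction k)
  case 0 then show ?case by simp
next
  case (Suc k) then show ?case by (simp add: val_Suc power_add algebra_simps)
qed

lemma val_mod: "m \<le> M \<Longrightarrow> val m d = val M d mod 2^m"
proof -
  assume "m \<le> M"
  then obtain k where k: "M = m + k" using le_Suc_ex by blast
  show ?thesis unfolding k val_split using val_less[of m d] by simp
qed

lemma val_ge_bit: "j < M \<Longrightarrow> d j \<Longrightarrow> 2^j \<le> val M d"
proof -
  assume j: "j < M" and dj: "d j"
  have "val M d = (\<Sum>i<M. if d i then 2^i else 0)" by (simp add: val_def)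
  moreover have "(if d j then 2^j else 0) \<le> (\<Sum>i<M. if d i then 2^i else (0::nat))"
    using j by (intro member_le_sum) auto
  ultimately show ?thesis using dj by simp
qed

lemma bit_ge: "bit (c::nat) q \<Longrightarrow> 2^q \<le> c"
proof -
  assume "bit c q"
  then have "odd (c div 2^q)" by (simp add: bit_iff_odd)
  then have "c div 2^q \<ge> 1" by (cases "c div 2^q") auto
  then have "2^q * 1 \<le> 2^q * (c div 2^q)" by (intro mult_left_mono) auto
  also have "\<dots> \<le> c" by (simp add: times_div_less_eq_dividend)
  finally show ?thesis by simp
qed

definition r :: "nat \<Rightarrow> nat" where "r k = 4*k+4"

definition hk :: "(nat \<Rightarrow> bool) \<Rightarrow> real" where
  "hk d = (if \<exists>k. 1 \<le> k \<and> \<not> d (r k) then (1/2)^(LEAST k. 1 \<le> k \<and> \<not> d (r k)) else 0)"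

primrec Slev :: "(nat \<Rightarrow> bool) \<Rightarrow> real \<Rightarrow> nat \<Rightarrow> real" where
  "Slev d s 0 = s"
| "Slev d s (Suc n) = min (hk (padd d n)) (2 * Slev d s n)"

definition inC :: "(nat \<Rightarrow> bool) \<Rightarrow> bool" where
  "inC x \<longleftrightarrow> (\<forall>j. (x j \<longrightarrow> 10 \<le> j \<and> (j mod 8 = 2 \<or> j mod 8 = 6)) \<and> (10 \<le> j \<and> j mod 8 = 2 \<longrightarrow> x j))"

lemma hk_some: "\<exists>k. 1 \<le> k \<and> \<not> d (r k) \<Longrightarrow> hk d = (1/2)^(LEAST k. 1 \<le> k \<and> \<not> d (r k))"
  unfolding hk_def by (rule if_P)

lemma hk_none: "\<not> (\<exists>k. 1 \<le> k \<and> \<not> d (r k)) \<Longrightarrow> hk d = 0"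
  unfolding hk_def by (rule if_not_P)

lemma hk_lower: "1 \<le> k \<Longrightarrow> \<not> d (r k) \<Longrightarrow> (1/2)^k \<le> hk d"
proof -
  assume k: "1 \<le> k" "\<not> d (r k)"
  then have ex: "\<exists>k. 1 \<le> k \<and> \<not> d (r k)" by blast
  have "(LEAST k. 1 \<le> k \<and> \<not> d (r k)) \<le> k" using k by (intro Least_le) auto
  then have "(1/2::real)^k \<le> (1/2)^(LEAST k. 1 \<le> k \<and> \<not> d (r k))"
    by (intro power_decreasing) auto
  then show ?thesis using hk_some[OF ex] by simp
qed

lemma hk_upper: "(\<And>j. 1 \<le> j \<Longrightarrow> j \<le> k \<Longrightarrow> d (r j)) \<Longrightarrow> hk d \<le> (1/2)^(k+1)"
proof -
  assume h: "\<And>j. 1 \<le> j \<Longrightarrow> j \<le> k \<Longrightarrow> d (r j)"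
  show ?thesis
  proof (cases "\<exists>k. 1 \<le> k \<and> \<not> d (r k)")
    case True
    let ?L = "LEAST k. 1 \<le> k \<and> \<not> d (r k)"
    have L: "1 \<le> ?L \<and> \<not> d (r ?L)" using True by (rule LeastI_ex)
    have "\<not> ?L \<le> k"
    proof
      assume "?L \<le> k"
      then have "d (r ?L)" using h L by blast
      then show False using L by blast
    qed
    then have "k + 1 \<le> ?L" by simp
    then have "(1/2::real)^?L \<le> (1/2)^(k+1)" by (intro power_decreasing) auto
    then show ?thesis using hk_some[OF True] by simp
  next
    case False then show ?thesis using hk_none[OF False] by simp
  qed
qed

lemma hk_nonneg: "0 \<le> hk d" by (cases "\<exists>k. 1 \<le> k \<and> \<not> d (r k)") (simp_all add: hk_some hk_none)

lemma hk_le_half: "hk d \<le> 1/2"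
proof (cases "\<exists>k. 1 \<le> k \<and> \<not> d (r k)")
  case True
  let ?L = "LEAST k. 1 \<le> k \<and> \<not> d (r k)"
  have "1 \<le> ?L" using LeastI_ex[OF True] by blast
  then have "(1/2::real)^?L \<le> (1/2)^1" by (intro power_decreasing) auto
  then show ?thesis using hk_some[OF True] by simp
next
  case False then show ?thesis using hk_none[OF False] by simp
qed

lemma hk_quarter: "d (r 1) \<Longrightarrow> \<not> d (r 2) \<Longrightarrow> hk d = 1/4"
proof -
  assume a: "d (r 1)" "\<not> d (r 2)"
  have "hk d \<le> (1/2)^(1+1)" using a by (intro hk_upper) (metis le_antisym)
  moreover have "(1/2)^2 \<le> hk d" using a by (intro hk_lower) auto
  ultimately show ?thesis by (simp add: power2_eq_square)
qed

lemma hk_vals: "hk d \<in> insert 0 ((\<lambda>k. (1/2)^(Suc k)) ` UNIV)"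
proof (cases "\<exists>k. 1 \<le> k \<and> \<not> d (r k)")
  case True
  let ?L = "LEAST k. 1 \<le> k \<and> \<not> d (r k)"
  have "1 \<le> ?L" using LeastI_ex[OF True] by blast
  then have "?L = Suc (?L - 1)" by simp
  then obtain j where j: "?L = Suc j" by blast
  have "(1/2::real)^(Suc j) \<in> (\<lambda>k. (1/2)^(Suc k)) ` UNIV" by (rule rangeI)
  then show ?thesis using hk_some[OF True] j by simp
next
  case False then show ?thesis using hk_none[OF False] by simp
qed

lemma hk_agree:
  assumes "\<And>j. 1 \<le> j \<Longrightarrow> j \<le> N \<Longrightarrow> d (r j) = d' (r j)"
  shows "\<bar>hk d - hk d'\<bar> \<le> (1/2)^N"
proof (cases "\<exists>k. 1 \<le> k \<and> k \<le> N \<and> \<not> d (r k)")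
  case True
  then have ex: "\<exists>k. 1 \<le> k \<and> \<not> d (r k)" by blast
  have ex': "\<exists>k. 1 \<le> k \<and> \<not> d' (r k)" using True assms by blast
  have "(LEAST k. 1 \<le> k \<and> \<not> d (r k)) = (LEAST k. 1 \<le> k \<and> \<not> d' (r k))"
  proof -
    obtain k0 where k0: "1 \<le> k0" "k0 \<le> N" "\<not> d (r k0)" using True by blast
    have "\<And>k. k \<le> k0 \<Longrightarrow> (1 \<le> k \<and> \<not> d (r k)) = (1 \<le> k \<and> \<not> d' (r k))"
      using assms k0 by auto
    moreover have L1: "(LEAST k. 1 \<le> k \<and> \<not> d (r k)) \<le> k0" using k0 by (intro Least_le) auto
    moreover have L2: "(LEAST k. 1 \<le> k \<and> \<not> d' (r k)) \<le> k0" using k0 assms by (intro Least_le) auto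
    show ?thesis
    proof (rule Least_equality[symmetric])
      have "1 \<le> (LEAST k. 1 \<le> k \<and> \<not> d (r k)) \<and> \<not> d (r (LEAST k. 1 \<le> k \<and> \<not> d (r k)))"
        using ex by (rule LeastI_ex)
      then show "1 \<le> (LEAST k. 1 \<le> k \<and> \<not> d (r k)) \<and> \<not> d' (r (LEAST k. 1 \<le> k \<and> \<not> d (r k)))"
        using assms L1 k0 by auto
    next
      fix y assume y: "1 \<le> y \<and> \<not> d' (r y)"
      show "(LEAST k. 1 \<le> k \<and> \<not> d (r k)) \<le> y"
      proof (cases "y \<le> k0")
        case True
        then have "1 \<le> y \<and> \<not> d (r y)" using y assms k0 by auto
        then show ?thesis by (rule Least_le)
      next
        case False then show ?thesis using L1 by simp
      qed
    qed
  qed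
  then have "hk d = hk d'" by (simp only: hk_some[OF ex] hk_some[OF ex'])
  then show ?thesis by simp
next
  case False
  then have "\<And>j. 1 \<le> j \<Longrightarrow> j \<le> N \<Longrightarrow> d (r j)" by blast
  then have a: "hk d \<le> (1/2)^(N+1)" by (rule hk_upper)
  have "\<And>j. 1 \<le> j \<Longrightarrow> j \<le> N \<Longrightarrow> d' (r j)" using False assms by blast
  then have b: "hk d' \<le> (1/2)^(N+1)" by (rule hk_upper)
  have "(1/2::real)^(N+1) \<le> (1/2)^N" by (intro power_decreasing) auto
  then show ?thesis using a b hk_nonneg[of d] hk_nonneg[of d'] by linarith
qed

lemma Slev_lower:
  "(\<And>i. i < n \<Longrightarrow> (1/2)^(c + (n - 1 - i)) \<le> hk (padd d i)) \<Longrightarrow> (1/2)^(c+n) \<le> s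
    \<Longrightarrow> (1/2)^c \<le> Slev d s n"
proof (induction n arbitrary: c)
  case 0 then show ?case by simp
next
  case (Suc n)
  have h1: "(1/2)^c \<le> hk (padd d n)" using Suc.prems(1)[of n] by simp
  have "(1/2)^(c+1) \<le> Slev d s n"
  proof (rule Suc.IH)
    fix i assume "i < n"
    then show "(1/2)^(c + 1 + (n - 1 - i)) \<le> hk (padd d i)"
      using Suc.prems(1)[of i] by (simp add: Suc_diff_Suc)
  next
    show "(1/2)^(c + 1 + n) \<le> s" using Suc.prems(2) by (simp add: ac_simps)
  qed
  then have "(1/2)^c \<le> 2 * Slev d s n" by simp
  then show ?case using h1 by simp
qed

lemma hdb: "(w::nat) < v \<Longrightarrow> \<exists>f. bit v f \<and> \<not> bit w f \<and> w div 2^(Suc f) = v div 2^(Suc f)"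
proof (induction v arbitrary: w rule: less_induct)
  case (less v)
  show ?case
  proof (cases "w div 2 = v div 2")
    case True
    then have "odd v" "even w" using less.prems by presburger+
    then show ?thesis using True by (intro exI[of _ 0]) (simp add: bit_0)
  next
    case False
    have "w div 2 \<le> v div 2" using less.prems by (intro div_le_mono) simp
    then have lt: "w div 2 < v div 2" using False by linarith
    have "v div 2 < v" using less.prems by simp
    then obtain f where f: "bit (v div 2) f" "\<not> bit (w div 2) f" "w div 2 div 2^(Suc f) = v div 2 div 2^(Suc f)"
      using less.IH lt by blast
    have e1: "w div 2^(Suc (Suc f)) = w div 2 div 2^(Suc f)" using div_exp_eq[of w 1 "Suc f"] by simp
    have e2: "v div 2^(Suc (Suc f)) = v div 2 div 2^(Suc f)" using div_exp_eq[of v 1 "Suc f"] by simp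
    show ?thesis
      using f e1 e2 by (intro exI[of _ "Suc f"]) (simp only: bit_Suc, simp)
  qed
qed

lemma bit_high: "bit (a::nat) (Suc f + j) = bit (a div 2^(Suc f)) j"
proof -
  have "a div 2^(Suc f) div 2^j = a div 2^(Suc f + j)" by (rule div_exp_eq)
  then show ?thesis by (simp only: bit_iff_odd)
qed

lemma pow_big: "6 \<le> n \<Longrightarrow> n + 8 \<le> (2::nat)^n"
proof (induction n rule: dec_induct)
  case base then show ?case by simp
next
  case (step n) then show ?case by simp
qed

lemma mod8_2: "(8 * t + 2) mod 8 = (2::nat)" by presburger

lemma struct:
  assumes x: "inC x" and m: "m mod 4 = 1" "13 \<le> m" and w: "w < val m x"
  shows "\<exists>k. 1 \<le> k \<and> k \<le> 2 + (val m x - 1 - w) \<and> r k < m \<and> \<not> bit w (r k)"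
proof -
  let ?v = "val m x"
  obtain f where f: "bit ?v f" "\<not> bit w f" "w div 2^(Suc f) = ?v div 2^(Suc f)"
    using hdb[OF w] by blast
  have fm: "f < m"
  proof (rule ccontr)
    assume "\<not> f < m"
    then have "(2::nat)^m \<le> 2^f" by simp
    moreover have "2^f \<le> ?v" using f(1) by (rule bit_ge)
    ultimately show False using val_less[of m x] by linarith
  qed
  have xf: "x f" using f(1) bit_val[OF fm] by simp
  have "x f \<longrightarrow> 10 \<le> f \<and> (f mod 8 = 2 \<or> f mod 8 = 6)" using x unfolding inC_def by blast
  then have f10: "10 \<le> f" and f8: "f mod 8 = 2 \<or> f mod 8 = 6" using xf by auto
  define k where "k = (f - 2) div 4"
  have rk: "r k = f + 2" using f8 f10 unfolding k_def r_def by presburger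
  have k1: "1 \<le> k" using f10 unfolding k_def by simp
  have rkm: "r k < m" using rk fm f8 m by presburger
  have "bit w (r k) = bit (w div 2^(Suc f)) 1" using rk bit_high[of w f 1] by simp
  also have "\<dots> = bit (?v div 2^(Suc f)) 1" using f(3) by simp
  also have "\<dots> = bit ?v (r k)" using rk bit_high[of ?v f 1] by simp
  also have "\<dots> = x (r k)" using bit_val[OF rkm] by simp
  also have "\<dots> = False"
  proof -
    have "x (f+2) \<longrightarrow> 10 \<le> f+2 \<and> ((f+2) mod 8 = 2 \<or> (f+2) mod 8 = 6)" using x unfolding inC_def by blast
    moreover have "\<not> ((f+2) mod 8 = 2 \<or> (f+2) mod 8 = 6)" using f8 by presburger
    ultimately show ?thesis using rk by simp
  qed
  finally have nb: "\<not> bit w (r k)" by simp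
  have "take_bit (Suc f) w = take_bit f w" using f(2) by (simp only: take_bit_Suc_from_most) simp
  then have tw: "w mod 2^(Suc f) = w mod 2^f" by (simp only: take_bit_eq_mod)
  have "take_bit (Suc f) ?v = 2^f + take_bit f ?v" using f(1) by (simp only: take_bit_Suc_from_most) simp
  then have tv: "?v mod 2^(Suc f) = 2^f + ?v mod 2^f" by (simp only: take_bit_eq_mod)
  have "w = w div 2^(Suc f) * 2^(Suc f) + w mod 2^(Suc f)" by (rule div_mult_mod_eq[symmetric])
  moreover have "?v = ?v div 2^(Suc f) * 2^(Suc f) + ?v mod 2^(Suc f)" by (rule div_mult_mod_eq[symmetric])
  moreover have "w mod 2^f < 2^f" by simp
  moreover have "w div 2^(Suc f) * 2^(Suc f) = ?v div 2^(Suc f) * 2^(Suc f)" using f(3) by simp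
  ultimately have e: "?v mod 2^f \<le> ?v - 1 - w" using tw tv by linarith
  have "k \<le> 2 + (?v - 1 - w)"
  proof (cases "f = 10")
    case True then show ?thesis unfolding k_def by simp
  next
    case False
    have fdm: "f = 8 * (f div 8) + f mod 8" by simp
    have qex: "\<exists>q. q mod 8 = 2 \<and> 10 \<le> q \<and> q < f \<and> f \<le> q + 8 \<and> 14 \<le> f"
    proof (cases "f mod 8 = 2")
      case True
      then have ft: "f = 8 * (f div 8) + 2" using fdm by simp
      then have t2: "2 \<le> f div 8" using f10 False by linarith
      then obtain t where t: "f div 8 = Suc t" by (cases "f div 8") auto
      then have "(8 * t + 2) mod 8 = 2 \<and> 10 \<le> 8 * t + 2 \<and> 8 * t + 2 < f
          \<and> f \<le> 8 * t + 2 + 8 \<and> 14 \<le> f"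
        using ft t2 mod8_2[of t] by auto
      then show ?thesis by blast
    next
      case False
      then have "f mod 8 = 6" using f8 by simp
      then have ft: "f = 8 * (f div 8) + 6" using fdm by simp
      then have "1 \<le> f div 8" using f10 by linarith
      then have "(8 * (f div 8) + 2) mod 8 = 2 \<and> 10 \<le> 8 * (f div 8) + 2 \<and> 8 * (f div 8) + 2 < f
          \<and> f \<le> 8 * (f div 8) + 2 + 8 \<and> 14 \<le> f"
        using ft mod8_2[of "f div 8"] by auto
      then show ?thesis by blast
    qed
    then obtain q where q: "q mod 8 = 2" "10 \<le> q" "q < f" "f \<le> q + 8" and f14: "14 \<le> f" by blast
    have "10 \<le> q \<and> q mod 8 = 2 \<longrightarrow> x q" using x unfolding inC_def by blast
    then have "x q" using q(1,2) by simp
    then have "bit ?v q" using bit_val[of q m x] q fm by simp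
    then have "bit (?v mod 2^f) q" using q by (simp add: take_bit_eq_mod[symmetric] bit_take_bit_iff)
    then have "2^q \<le> ?v mod 2^f" by (rule bit_ge)
    moreover have "(2::nat)^(f - 8) \<le> 2^q" using q by (intro power_increasing) auto
    moreover have "f - 8 + 8 \<le> (2::nat)^(f-8)" using f14 by (intro pow_big) simp
    moreover have "k \<le> f - 8 + 8" unfolding k_def by simp
    ultimately show ?thesis using e by linarith
  qed
  then show ?thesis using k1 rkm nb by blast
qed

lemma mod_aux0: "m mod 4 = (1::nat) \<Longrightarrow> m mod 8 = 1 \<or> m mod 8 = 5"
  by presburger

lemma mod_aux1: "m mod 4 = (1::nat) \<Longrightarrow> 21 \<le> m \<Longrightarrow> (m - 3) mod 8 = 2 \<or> (m - 7) mod 8 = 2"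
proof -
  assume m: "m mod 4 = 1" "21 \<le> m"
  have fdm: "m = 8 * (m div 8) + m mod 8" by simp
  show ?thesis
  proof (cases "m mod 8 = 5")
    case True
    then have "m - 3 = 8 * (m div 8) + 2" using fdm by linarith
    then show ?thesis using mod8_2[of "m div 8"] by simp
  next
    case False
    then have "m mod 8 = 1" using mod_aux0[OF m(1)] by simp
    then have e: "m = 8 * (m div 8) + 1" using fdm by linarith
    then have "3 \<le> m div 8" using m(2) by linarith
    then obtain t where t: "m div 8 = Suc t" by (cases "m div 8") auto
    then have "m - 7 = 8 * t + 2" using e by linarith
    then show ?thesis using mod8_2[of t] by simp
  qed
qed

lemma mod_aux2: "(q::nat) mod 8 = 2 \<or> q mod 8 = 6 \<Longrightarrow> q mod 4 \<noteq> 0"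
  by presburger

lemma mod_aux3: "(4 * j + 4::nat) mod 4 = 0"
  by presburger

lemma mod_aux4: "M mod 4 = (1::nat) \<Longrightarrow> 4 * ((M - 1) div 4) + 4 = M + 3"
  by presburger

lemma mod_aux5: "M mod 4 = (1::nat) \<Longrightarrow> \<not> ((M + 3) mod 8 = 2 \<or> (M + 3) mod 8 = 6)"
  by presburger

lemma inC_not: "inC x \<Longrightarrow> \<not> (j mod 8 = 2 \<or> j mod 8 = 6) \<Longrightarrow> \<not> x j"
  unfolding inC_def by blast

lemma inC_not_rule: "inC x \<Longrightarrow> \<not> x (r k)"
proof -
  assume x: "inC x"
  have "r k mod 4 = 0" unfolding r_def by (rule mod_aux3)
  then have "\<not> (r k mod 8 = 2 \<or> r k mod 8 = 6)" using mod_aux2[of "r k"] by auto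
  then show ?thesis using inC_not[OF x] by blast
qed

lemma inC_yes: "inC x \<Longrightarrow> 10 \<le> j \<Longrightarrow> j mod 8 = 2 \<Longrightarrow> x j"
  unfolding inC_def by blast

lemma inC_low: "inC x \<Longrightarrow> j < 13 \<Longrightarrow> x j = (j = 10)"
proof -
  assume x: "inC x" and j: "j < 13"
  show ?thesis
  proof (cases "j = 10")
    case True then show ?thesis using inC_yes[OF x, of 10] by simp
  next
    case False
    have imp: "x j \<longrightarrow> 10 \<le> j \<and> (j mod 8 = 2 \<or> j mod 8 = 6)" using x unfolding inC_def by blast
    have "j < 10 \<or> j = 11 \<or> j = 12" using j False by arith
    then have "\<not> (10 \<le> j \<and> (j mod 8 = 2 \<or> j mod 8 = 6))" by auto
    then show ?thesis using imp False by blast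
  qed
qed

lemma val13: "inC x \<Longrightarrow> val 13 x = 1024"
proof -
  assume x: "inC x"
  have "val 13 x = val 13 (\<lambda>j. j = 10)"
    unfolding val_def using inC_low[OF x] by (intro sum.cong) auto
  also have "\<dots> = 1024" by (simp add: val_def eval_nat_numeral)
  finally show ?thesis .
qed

lemma bits1023: "bit (1023::nat) 8" "\<not> bit (1023::nat) 12"
  by (simp_all add: bit_numeral_simps)

lemma reach:
  assumes p: "inC p" and x: "inC x" and m: "m mod 4 = 1" "21 \<le> m" and a0: "a0 \<le> 2^(m-7)"
  shows "\<exists>n. 2^(m-7) \<le> n \<and> val m (padd p n) = val m x \<and> Slev p ((1/2)^a0) n = 1/4"
proof -
  define M where "M = m + 8"
  have M4: "M mod 4 = 1" using m(1) unfolding M_def by presburger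
  define vp where "vp = val M p"
  define v where "v = val m x"
  have vpl: "vp < 2^M" unfolding vp_def by (rule val_less)
  have vl: "v < 2^m" unfolding v_def by (rule val_less)
  have vbig: "2^(m-7) \<le> v"
  proof -
    have "\<exists>q. q mod 8 = 2 \<and> m - 7 \<le> q \<and> q < m"
    proof (cases "(m - 3) mod 8 = 2")
      case True then show ?thesis using m(2) by (intro exI[of _ "m - 3"]) simp
    next
      case False then have "(m - 7) mod 8 = 2" using mod_aux1[OF m] by simp
      then show ?thesis using m(2) by (intro exI[of _ "m - 7"]) simp
    qed
    then obtain q where q: "q mod 8 = 2" "m - 7 \<le> q" "q < m" by blast
    have "10 \<le> q" using q m(2) by linarith
    then have "x q" using inC_yes[OF x] q by blast
    then have "2^q \<le> v" unfolding v_def using q by (intro val_ge_bit) auto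
    moreover have "(2::nat)^(m-7) \<le> 2^q" using q by (intro power_increasing) auto
    ultimately show ?thesis by linarith
  qed
  define n where "n = 2^M - vp + v"
  have nv: "vp + n = 2^M + v" unfolding n_def using vpl by simp
  have nbig: "2^(m-7) \<le> n" unfolding n_def using vbig vpl by simp
  have c2: "val m (padd p n) = v"
  proof -
    have "val m (padd p n) = (val m p + n) mod 2^m" by (rule val_padd)
    also have "val m p = vp mod 2^m" unfolding vp_def M_def by (rule val_mod) simp
    also have "(vp mod 2^m + n) mod 2^m = (vp + n) mod 2^m" by (simp add: mod_add_left_eq)
    also have "\<dots> = (2^M + v) mod 2^m" using nv by simp
    also have "(2::nat)^M = 2^m * 2^8" unfolding M_def by (simp add: power_add)
    also have "(2^m * 2^8 + v) mod 2^m = v" using vl by simp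
    finally show ?thesis .
  qed
  have "n \<noteq> 0" using nbig by (metis le_zero_eq power_not_zero zero_neq_numeral)
  then obtain n' where n': "n = Suc n'" by (cases n) auto
  have up: "Slev p ((1/2)^a0) n \<le> 1/4"
  proof -
    have "v = val 13 x + 2^13 * val (m - 13) (\<lambda>j. x (13 + j))"
      unfolding v_def using val_split[of 13 "m - 13" x] m(2) by simp
    then obtain T where T: "v = 1024 + 2^13 * T" using val13[OF x] by auto
    have vp1: "vp + n' = (1023 + 2^13 * T) + 2^M * 1" using nv n' T by simp
    have "(2::nat)^m \<le> 2^M" unfolding M_def by (intro power_increasing) auto
    then have l1: "1023 + 2^13 * T < (2::nat)^M" using T vl by linarith
    have db: "padd p n' j = bit (1023::nat) j" if "j < 13" for j
    proof -
      have "13 \<le> M" unfolding M_def using m by simp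
      then have "padd p n' j = bit (vp + n') j" unfolding vp_def using that by (intro padd_bit) simp
      also have "\<dots> = bit (1023 + 2^13 * T) j" unfolding vp1 using l1 \<open>13 \<le> M\<close> that
        by (subst bit_add_pow) auto
      also have "\<dots> = bit (1023::nat) j" using that by (subst bit_add_pow) auto
      finally show ?thesis .
    qed
    have "hk (padd p n') = 1/4"
      using db[of 8] db[of 12] bits1023 by (intro hk_quarter) (simp_all add: r_def)
    then show ?thesis using n' by simp
  qed
  have low: "(1/2)^2 \<le> Slev p ((1/2)^a0) n"
  proof (rule Slev_lower)
    show "(1/2)^(2+n) \<le> ((1/2::real)^a0)"
      using a0 nbig by (intro power_decreasing) auto
  next
    fix i assume i: "i < n"
    show "(1/2)^(2 + (n - 1 - i)) \<le> hk (padd p i)"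
    proof (cases "vp + i < 2^M")
      case True
      define K where "K = (M - 1) div 4"
      have rK: "r K = M + 3" unfolding r_def K_def by (rule mod_aux4[OF M4])
      have "padd p i (M + 3) = bit (val (M + 4) p + i) (M + 3)" by (intro padd_bit) simp
      also have "val (M + 4) p = vp + 2^M * val 4 (\<lambda>j. p (M + j))" unfolding vp_def by (rule val_split)
      also have "bit (vp + 2^M * val 4 (\<lambda>j. p (M + j)) + i) (M + 3) = bit (val 4 (\<lambda>j. p (M + j))) 3"
        using bit_add_pow[OF True, of "val 4 (\<lambda>j. p (M + j))" "M + 3"] by (simp add: ac_simps)
      also have "\<dots> = p (M + 3)" using bit_val[of 3 4] by simp
      also have "\<dots> = False" using inC_not[OF p mod_aux5[OF M4]] by simp
      finally have nb: "\<not> padd p i (r K)" using rK by simp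
      have K1: "1 \<le> K" unfolding K_def M_def using m by simp
      have "K \<le> m + 1" unfolding K_def M_def by simp
      also have "m + 1 \<le> 2^(m-7)" using pow_big[of "m - 7"] m(2) by simp
      also have "\<dots> \<le> v" by (rule vbig)
      also have "v \<le> n - 1 - i" using True nv by linarith
      finally have "K \<le> 2 + (n - 1 - i)" by simp
      then have "(1/2::real)^(2 + (n - 1 - i)) \<le> (1/2)^K" by (intro power_decreasing) auto
      also have "\<dots> \<le> hk (padd p i)" using K1 nb by (rule hk_lower)
      finally show ?thesis .
    next
      case False
      define w where "w = vp + i - 2^M"
      have w: "w < v" unfolding w_def using False i nv by linarith
      obtain k where k: "1 \<le> k" "k \<le> 2 + (v - 1 - w)" "r k < m" "\<not> bit w (r k)"
        using struct[OF x m(1) _ w[unfolded v_def]] m(2) unfolding v_def by auto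
      have "(2::nat)^m \<le> 2^M" unfolding M_def by (intro power_increasing) auto
      then have wM: "w < 2^M" using w vl by linarith
      have rkM: "r k < M" using k(3) unfolding M_def by simp
      have b2: "bit (w + 2^M * 1) (r k) = bit w (r k)" using bit_add_pow[OF wM, of 1 "r k"] rkM by simp
      have "padd p i (r k) = bit (vp + i) (r k)" unfolding vp_def using rkM by (intro padd_bit)
      also have "vp + i = w + 2^M * 1" unfolding w_def using False by simp
      also note b2
      finally have nb: "\<not> padd p i (r k)" using k(4) by simp
      have "v - 1 - w = n - 1 - i" unfolding w_def using False nv i by linarith
      then have "k \<le> 2 + (n - 1 - i)" using k(2) by simp
      then have "(1/2::real)^(2 + (n - 1 - i)) \<le> (1/2)^k" by (intro power_decreasing) auto
      also have "\<dots> \<le> hk (padd p i)" using k(1) nb by (rule hk_lower)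
      finally show ?thesis .
    qed
  qed
  have "Slev p ((1/2)^a0) n = 1/4" using up low by (simp add: power2_eq_square)
  then show ?thesis using nbig c2 unfolding v_def by blast
qed

definition RH :: "nat \<Rightarrow> nat \<Rightarrow> bool" where
  "RH H q = (q mod 4 = 0 \<and> 8 \<le> q \<and> q \<le> 4*H+4)"

definition NH :: "nat \<Rightarrow> nat" where
  "NH H = val (4*H+9) (RH H)"

lemma val_disj: "(\<And>j. j < M \<Longrightarrow> \<not> (a j \<and> b j)) \<Longrightarrow> val M a + val M b = val M (\<lambda>j. a j \<or> b j)"
  unfolding val_def sum.distrib[symmetric] by (intro sum.cong) auto

lemma NH_big: "1 \<le> H \<Longrightarrow> 2^(4*H+4) \<le> NH H"
  unfolding NH_def by (intro val_ge_bit) (auto simp: RH_def intro: mod_aux3)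

lemma window:
  assumes x: "inC x" and H: "1 \<le> H"
  shows "Slev x s (Suc (NH H)) \<le> (1/2)^(H+1)"
proof -
  define M where "M = 4*H+9"
  have dis: "\<not> (x j \<and> RH H j)" for j
  proof
    assume a: "x j \<and> RH H j"
    then have "j mod 8 = 2 \<or> j mod 8 = 6" using x unfolding inC_def by blast
    then have "j mod 4 \<noteq> 0" by (rule mod_aux2)
    then show False using a by (simp add: RH_def)
  qed
  have "padd x (NH H) (r j)" if j: "1 \<le> j" "j \<le> H" for j
  proof -
    have rj: "r j < M" unfolding r_def M_def using j by simp
    have "padd x (NH H) (r j) = bit (val M x + NH H) (r j)" using rj by (rule padd_bit)
    also have "val M x + NH H = val M (\<lambda>q. x q \<or> RH H q)"
      unfolding NH_def M_def[symmetric] using dis by (intro val_disj) blast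
    also have "bit (val M (\<lambda>q. x q \<or> RH H q)) (r j) = (x (r j) \<or> RH H (r j))" using rj by (rule bit_val)
    finally show ?thesis using j unfolding RH_def r_def by (auto intro: mod_aux3)
  qed
  then have "hk (padd x (NH H)) \<le> (1/2)^(H+1)" by (rule hk_upper)
  then show ?thesis by simp
qed

definition K0 :: "real set" where "K0 = insert 0 ((\<lambda>k. (1/2)^(Suc k)) ` UNIV)"

definition enc :: "(nat \<Rightarrow> bool) \<Rightarrow> real \<Rightarrow> nat \<Rightarrow> real" where
  "enc d s = (\<lambda>i. case i of 0 \<Rightarrow> s | Suc j \<Rightarrow> (if d j then 1 else 0))"

definition dec :: "(nat \<Rightarrow> real) \<Rightarrow> nat \<Rightarrow> bool" where
  "dec w = (\<lambda>j. w (Suc j) = 1)"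

definition gmap :: "(nat \<Rightarrow> real) \<Rightarrow> nat \<Rightarrow> real" where
  "gmap w = (\<lambda>i. case i of 0 \<Rightarrow> min (hk (dec w)) (2 * w 0) | Suc j \<Rightarrow> (if add1 (dec w) j then 1 else 0))"

definition Om :: "(nat \<Rightarrow> real) set" where
  "Om = {w. w 0 \<in> K0 \<and> (\<forall>j. w (Suc j) \<in> {0,1})}"

lemma enc_0 [simp]: "enc d s 0 = s" by (simp add: enc_def)
lemma enc_Suc [simp]: "enc d s (Suc j) = (if d j then 1 else 0)" by (simp add: enc_def)

lemma dec_enc [simp]: "dec (enc d s) = d" by (simp add: dec_def enc_def)

lemma Om_enc: "w \<in> Om \<Longrightarrow> w = enc (dec w) (w 0)"
proof
  fix i assume w: "w \<in> Om"
  show "w i = enc (dec w) (w 0) i"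
  proof (cases i)
    case 0 then show ?thesis by simp
  next
    case (Suc j)
    have "w (Suc j) \<in> {0,1}" using w by (simp add: Om_def)
    then show ?thesis using Suc by (auto simp: dec_def)
  qed
qed

lemma enc_in_Om: "s \<in> K0 \<Longrightarrow> enc d s \<in> Om"
  by (simp add: Om_def)

lemma gmap_enc: "gmap (enc d s) = enc (add1 d) (min (hk d) (2 * s))"
proof
  fix i show "gmap (enc d s) i = enc (add1 d) (min (hk d) (2 * s)) i"
    by (cases i) (simp_all add: gmap_def)
qed

lemma gmap_iter: "(gmap ^^ n) (enc d s) = enc (padd d n) (Slev d s n)"
proof (induction n)
  case 0 then show ?case by simp
next
  case (Suc n) then show ?case by (simp add: gmap_enc padd_Suc)
qed

lemma hk_K0: "hk d \<in> K0" using hk_vals unfolding K0_def .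

lemma K0_nonneg: "s \<in> K0 \<Longrightarrow> 0 \<le> s" by (auto simp: K0_def)

lemma K0_step: "s \<in> K0 \<Longrightarrow> min (hk d) (2 * s) \<in> K0"
proof -
  assume s: "s \<in> K0"
  show ?thesis
  proof (cases "hk d \<le> 2 * s")
    case True then show ?thesis using hk_K0 by (simp add: min_def)
  next
    case False
    then have m: "min (hk d) (2 * s) = 2 * s" by simp
    show ?thesis
    proof (cases "s = 0")
      case True then show ?thesis using m by (simp add: K0_def)
    next
      case False
      then obtain k where k: "s = (1/2)^(Suc k)" using s by (auto simp: K0_def)
      show ?thesis
      proof (cases k)
        case 0
        then have "2 * s = 1" using k by simp
        then show ?thesis using hk_le_half[of d] \<open>\<not> hk d \<le> 2 * s\<close> by simp
      next
        case (Suc k')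
        then have "2 * s = (1/2)^(Suc k')" using k by simp
        then show ?thesis using m by (simp add: K0_def)
      qed
    qed
  qed
qed

lemma Slev_K0: "s \<in> K0 \<Longrightarrow> Slev d s n \<in> K0"
  by (induction n) (simp_all add: K0_step)

lemma gmap_Om: "w \<in> Om \<Longrightarrow> gmap w \<in> Om"
proof -
  assume w: "w \<in> Om"
  then have "w = enc (dec w) (w 0)" by (rule Om_enc)
  then have "gmap w = enc (add1 (dec w)) (min (hk (dec w)) (2 * w 0))" by (metis gmap_enc)
  moreover have "w 0 \<in> K0" using w by (simp add: Om_def)
  ultimately show ?thesis by (simp add: enc_in_Om K0_step)
qed

lemma iter_Om: "w \<in> Om \<Longrightarrow> (gmap ^^ n) w \<in> Om"
  by (induction n) (simp_all add: gmap_Om)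

lemma K0_compact: "compact K0"
proof -
  have "(\<lambda>k. (1/2::real)^(Suc k)) \<longlonglongrightarrow> 0"
    using LIMSEQ_power_zero[of "1/2::real"] by (intro LIMSEQ_Suc) simp
  then show ?thesis unfolding K0_def by (rule compact_sequence_with_limit)
qed

lemma Om_PiE: "Om = PiE UNIV (\<lambda>i. case i of 0 \<Rightarrow> K0 | Suc j \<Rightarrow> {0,1})"
proof
  show "Om \<subseteq> PiE UNIV (\<lambda>i. case i of 0 \<Rightarrow> K0 | Suc j \<Rightarrow> {0,1})"
  proof
    fix w assume "w \<in> Om"
    then show "w \<in> PiE UNIV (\<lambda>i. case i of 0 \<Rightarrow> K0 | Suc j \<Rightarrow> {0,1})"
      by (auto simp: Om_def PiE_iff split: nat.split)
  qed
next
  show "PiE UNIV (\<lambda>i. case i of 0 \<Rightarrow> K0 | Suc j \<Rightarrow> {0,1}) \<subseteq> Om"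
  proof
    fix w assume w: "w \<in> PiE UNIV (\<lambda>i. case i of 0 \<Rightarrow> K0 | Suc j \<Rightarrow> {0,1})"
    have "w 0 \<in> K0" using w by (auto simp: PiE_iff dest: spec[of _ 0])
    moreover have "w (Suc j) \<in> {0,1}" for j using w by (auto simp: PiE_iff dest: spec[of _ "Suc j"])
    ultimately show "w \<in> Om" by (simp add: Om_def)
  qed
qed

lemma Om_compact: "compact Om"
proof -
  have "compactin (product_topology (\<lambda>i. euclidean) UNIV) (PiE UNIV (\<lambda>i. case i of 0 \<Rightarrow> K0 | Suc j \<Rightarrow> {0::real,1}))"
  proof (subst compactin_PiE, intro disjI2 ballI)
    fix i :: nat
    show "compactin euclidean (case i of 0 \<Rightarrow> K0 | Suc j \<Rightarrow> {0::real,1})"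
      by (cases i) (simp_all add: K0_compact)
  qed
  then show ?thesis unfolding Om_PiE euclidean_product_topology by simp
qed

lemma Om_closed: "closed Om" using Om_compact by (rule compact_imp_closed)

lemma cont_crit:
  fixes F :: "(nat \<Rightarrow> real) \<Rightarrow> real"
  assumes "\<And>w e. w \<in> Om \<Longrightarrow> 0 < e \<Longrightarrow> \<exists>N. \<forall>w'\<in>Om. (\<forall>j<N. dec w' j = dec w j) \<longrightarrow> \<bar>F w' - F w\<bar> < e"
  shows "continuous_on Om F"
  unfolding continuous_on_topological
proof (intro ballI allI impI)
  fix w B assume w: "w \<in> Om" and B: "open B" "F w \<in> B"
  obtain e where e: "0 < e" "ball (F w) e \<subseteq> B" using B openE by blast
  obtain N where N: "\<forall>w'\<in>Om. (\<forall>j<N. dec w' j = dec w j) \<longrightarrow> \<bar>F w' - F w\<bar> < e"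
    using assms[OF w e(1)] by blast
  define A where "A = {f. \<forall>i\<in>{..<N}. f (Suc i) \<in> ball (w (Suc i)) (1/2)}"
  have "open A" unfolding A_def by (intro product_topology_basis') auto
  moreover have "w \<in> A" unfolding A_def by simp
  moreover have "F y \<in> B" if y: "y \<in> Om" "y \<in> A" for y
  proof -
    have "dec y j = dec w j" if j: "j < N" for j
    proof -
      have "y (Suc j) \<in> {0,1}" "w (Suc j) \<in> {0,1}" using y(1) w by (auto simp: Om_def)
      moreover have "dist (w (Suc j)) (y (Suc j)) < 1/2" using y(2) j unfolding A_def by auto
      ultimately have "y (Suc j) = w (Suc j)" by (auto simp: dist_real_def)
      then show ?thesis by (simp add: dec_def)
    qed
    then have "\<bar>F y - F w\<bar> < e" using N y(1) by blast
    then show ?thesis using e(2) by (auto simp: dist_real_def)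
  qed
  ultimately show "\<exists>A. open A \<and> w \<in> A \<and> (\<forall>y\<in>Om. y \<in> A \<longrightarrow> F y \<in> B)" by blast
qed

lemma cont_hk: "continuous_on Om (\<lambda>w. hk (dec w))"
proof (rule cont_crit)
  fix w :: "nat \<Rightarrow> real" and e :: real assume "0 < e"
  obtain N' where N': "(1/2::real)^N' < e" using real_arch_pow_inv[OF \<open>0 < e\<close>, of "1/2"] by auto
  show "\<exists>N. \<forall>w'\<in>Om. (\<forall>j<N. dec w' j = dec w j) \<longrightarrow> \<bar>hk (dec w') - hk (dec w)\<bar> < e"
  proof (intro exI[of _ "Suc (r N')"] ballI impI)
    fix w' assume "\<forall>j<Suc (r N'). dec w' j = dec w j"
    then have "\<And>j. 1 \<le> j \<Longrightarrow> j \<le> N' \<Longrightarrow> dec w' (r j) = dec w (r j)" by (simp add: r_def)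
    then have "\<bar>hk (dec w') - hk (dec w)\<bar> \<le> (1/2)^N'" by (rule hk_agree)
    then show "\<bar>hk (dec w') - hk (dec w)\<bar> < e" using N' by linarith
  qed
qed

lemma cont_digit: "continuous_on Om (\<lambda>w. if add1 (dec w) j then 1 else (0::real))"
proof (rule cont_crit)
  fix w :: "nat \<Rightarrow> real" and e :: real assume "0 < e"
  show "\<exists>N. \<forall>w'\<in>Om. (\<forall>i<N. dec w' i = dec w i) \<longrightarrow> \<bar>(if add1 (dec w') j then 1 else 0) - (if add1 (dec w) j then 1 else (0::real))\<bar> < e"
  proof (intro exI[of _ "Suc j"] ballI impI)
    fix w' assume h: "\<forall>i<Suc j. dec w' i = dec w i"
    then have "add1 (dec w') j = add1 (dec w) j" by (simp add: add1_def)
    then show "\<bar>(if add1 (dec w') j then 1 else 0) - (if add1 (dec w) j then 1 else (0::real))\<bar> < e"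
      using \<open>0 < e\<close> by simp
  qed
qed

lemma cont_gmap: "continuous_on Om gmap"
proof (rule continuous_on_coordinatewise_then_product)
  fix i
  show "continuous_on Om (\<lambda>w. gmap w i)"
  proof (cases i)
    case 0
    have "continuous_on Om (\<lambda>w. min (hk (dec w)) (2 * w 0))"
      by (intro continuous_intros cont_hk continuous_on_subset[OF continuous_on_product_coordinates]) auto
    then show ?thesis using 0 by (simp add: gmap_def)
  next
    case (Suc j)
    then show ?thesis using cont_digit[of j] by (simp add: gmap_def)
  qed
qed

lemma cont_iter: "continuous_on Om (gmap ^^ n)"
proof (induction n)
  case 0 then show ?case by (simp add: continuous_on_id)
next
  case (Suc n)
  have "continuous_on Om (gmap \<circ> (gmap ^^ n))"
    using Suc cont_gmap iter_Om by (intro continuous_on_compose continuous_on_subset[OF cont_gmap]) auto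
  then show ?case by simp
qed

lemma dist_lower:
  fixes w w' :: "nat \<Rightarrow> real"
  shows "(1/2)^(to_nat i) * min (dist (w i) (w' i)) 1 \<le> dist w w'"
proof -
  have *: "summable (\<lambda>n. (1/2)^n * min (dist (w (from_nat n)) (w' (from_nat n))) 1)"
    by (rule summable_comparison_test'[of "\<lambda>n. (1/2)^n"], auto simp add: summable_geometric_iff)
  have "(\<Sum>n\<in>{to_nat i}. (1/2)^n * min (dist (w (from_nat n)) (w' (from_nat n))) 1)
      \<le> (\<Sum>n. (1/2)^n * min (dist (w (from_nat n)) (w' (from_nat n))) 1)"
    by (rule sum_le_suminf[OF *]) auto
  then show ?thesis unfolding dist_fun_def by simp
qed

lemma dist_upper:
  fixes w w' :: "nat \<Rightarrow> real"
  assumes "\<And>i. dist (w i) (w' i) \<le> \<delta>"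
  shows "dist w w' \<le> 2 * \<delta> + (1/2)^N"
proof -
  have "dist w w' \<le> 2 * Max {dist (w (from_nat n)) (w' (from_nat n)) |n. n \<le> N} + (1/2)^N"
    by (rule dist_fun_le_dist_first_terms)
  moreover have "Max {dist (w (from_nat n)) (w' (from_nat n)) |n. n \<le> N} \<le> \<delta>"
  proof (rule Max.boundedI)
    show "finite {dist (w (from_nat n)) (w' (from_nat n)) |n. n \<le> N}" by simp
    show "{dist (w (from_nat n)) (w' (from_nat n)) |n. n \<le> N} \<noteq> {}" by blast
  qed (use assms in auto)
  ultimately show ?thesis by linarith
qed

lemma dist_agree:
  assumes "0 < e"
  shows "\<exists>m0. \<forall>w w' :: nat \<Rightarrow> real. (\<forall>i<m0. w i = w' i) \<longrightarrow> dist w w' < e"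
proof -
  obtain N where N: "(1/2::real)^N < e" using real_arch_pow_inv[OF assms, of "1/2"] by auto
  define m0 where "m0 = Suc (Max ((from_nat :: nat \<Rightarrow> nat) ` {..N}))"
  have fm: "from_nat n < m0" if "n \<le> N" for n :: nat
  proof -
    have "(from_nat n :: nat) \<le> Max ((from_nat :: nat \<Rightarrow> nat) ` {..N})" using that by (intro Max_ge) auto
    then show ?thesis unfolding m0_def by simp
  qed
  show ?thesis
  proof (intro exI[of _ m0] allI impI)
    fix w w' :: "nat \<Rightarrow> real" assume a: "\<forall>i<m0. w i = w' i"
    have "dist w w' \<le> 2 * Max {dist (w (from_nat n)) (w' (from_nat n)) |n. n \<le> N} + (1/2)^N"
      by (rule dist_fun_le_dist_first_terms)
    moreover have "{dist (w (from_nat n)) (w' (from_nat n)) |n. n \<le> N} = {0}"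
    proof
      show "{dist (w (from_nat n)) (w' (from_nat n)) |n. n \<le> N} \<subseteq> {0}" using a fm by auto
      have "dist (w (from_nat 0)) (w' (from_nat 0)) = 0" using a fm[of 0] by simp
      then have "0 \<in> {dist (w (from_nat n)) (w' (from_nat n)) |n. n \<le> N}"
        by (intro CollectI exI[of _ 0]) simp
      then show "{0} \<subseteq> {dist (w (from_nat n)) (w' (from_nat n)) |n. n \<le> N}" by simp
    qed
    ultimately show "dist w w' < e" using N by simp
  qed
qed

lemma add1_lowdiff:
  assumes "\<forall>i<j0. d i = d' i" "d j0 \<noteq> d' j0"
  shows "(\<forall>i<j0. add1 d i = add1 d' i) \<and> add1 d j0 \<noteq> add1 d' j0"
proof -
  have "(\<forall>i<k. d i) = (\<forall>i<k. d' i)" if "k \<le> j0" for k using assms that by auto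
  then show ?thesis using assms unfolding add1_def by auto
qed

lemma padd_lowdiff:
  assumes "\<forall>i<j0. d i = d' i" "d j0 \<noteq> d' j0"
  shows "(\<forall>i<j0. padd d n i = padd d' n i) \<and> padd d n j0 \<noteq> padd d' n j0"
proof (induction n)
  case 0 then show ?case using assms by simp
next
  case (Suc n) then show ?case unfolding padd_Suc by (intro add1_lowdiff) auto
qed

lemma lowdiff_exists:
  assumes "d \<noteq> (d' :: nat \<Rightarrow> bool)"
  shows "\<exists>j0. (\<forall>i<j0. d i = d' i) \<and> d j0 \<noteq> d' j0"
proof -
  have ex: "\<exists>j. d j \<noteq> d' j" using assms by auto
  define j0 where "j0 = (LEAST j. d j \<noteq> d' j)"
  have "d j0 \<noteq> d' j0" unfolding j0_def using ex by (rule LeastI_ex)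
  moreover have "\<forall>i<j0. d i = d' i" unfolding j0_def using not_less_Least by blast
  ultimately show ?thesis by blast
qed

definition xstar :: "nat \<Rightarrow> bool" where "xstar j = (10 \<le> j \<and> j mod 8 = 2)"

lemma inC_xstar: "inC xstar"
  unfolding inC_def xstar_def by blast

definition z0 :: "nat \<Rightarrow> real" where "z0 = enc xstar (1/4)"

definition orb :: "nat \<Rightarrow> nat \<Rightarrow> real" where "orb n = (gmap ^^ n) z0"

definition Yset :: "(nat \<Rightarrow> real) set" where "Yset = closure (range orb)"

lemma quarter_K0: "(1/4::real) \<in> K0"
proof -
  have "(1/4::real) = (1/2)^(Suc 1)" by (simp add: power2_eq_square)
  then show ?thesis unfolding K0_def by blast
qed

lemma z0_Om: "z0 \<in> Om" unfolding z0_def by (rule enc_in_Om[OF quarter_K0])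

lemma orb_Om: "orb n \<in> Om" unfolding orb_def by (rule iter_Om[OF z0_Om])

lemma orb_eq: "orb n = enc (padd xstar n) (Slev xstar (1/4) n)"
  unfolding orb_def z0_def by (rule gmap_iter)

lemma Y_Om: "Yset \<subseteq> Om"
  unfolding Yset_def using orb_Om Om_closed by (intro closure_minimal) auto

lemma Y_compact: "compact Yset"
proof -
  have "compact (Om \<inter> Yset)" unfolding Yset_def by (intro compact_Int_closed Om_compact) simp
  moreover have "Om \<inter> Yset = Yset" using Y_Om by blast
  ultimately show ?thesis by simp
qed

lemma orb_Suc: "orb (Suc n) = gmap (orb n)"
  unfolding orb_def by simp

lemma gmap_Y: "gmap ` Yset \<subseteq> Yset"
proof -
  have c: "continuous_on (closure (range orb)) gmap"
    using continuous_on_subset[OF cont_gmap Y_Om] unfolding Yset_def .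
  have s: "gmap ` range orb \<subseteq> closure (range orb)"
  proof
    fix y assume "y \<in> gmap ` range orb"
    then obtain n where "y = gmap (orb n)" by blast
    then have y: "y = orb (Suc n)" by (simp add: orb_Suc)
    have "orb (Suc n) \<in> range orb" by (rule rangeI)
    then have "orb (Suc n) \<in> closure (range orb)" by (rule closure_subset[THEN subsetD])
    then show "y \<in> closure (range orb)" using y by simp
  qed
  have "gmap ` closure (range orb) \<subseteq> closure (range orb)"
    by (rule image_closure_subset[OF c closed_closure s])
  then show ?thesis unfolding Yset_def .
qed

lemma iter_Y: "w \<in> Yset \<Longrightarrow> (gmap ^^ n) w \<in> Yset" for w
proof (induction n)
  case 0 then show ?case by simp
next
  case (Suc n)
  then have "(gmap ^^ n) w \<in> Yset" by simp
  then have "gmap ((gmap ^^ n) w) \<in> gmap ` Yset" by (rule imageI)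
  then show ?case using gmap_Y by (simp add: subset_iff)
qed

lemma mod4_1: "(4 * B + 1) mod 4 = (1::nat)" by presburger

lemma m_choice: "\<exists>m::nat. m mod 4 = 1 \<and> B \<le> m"
proof -
  have "(4 * B + 1) mod 4 = 1 \<and> B \<le> 4 * B + 1" using mod4_1[of B] by simp
  then show ?thesis by blast
qed

lemma enc_close:
  assumes "0 < e"
  shows "\<exists>m0. \<forall>d d' s. (\<forall>j<m0. d j = d' j) \<longrightarrow> dist (enc d s) (enc d' s) < e"
proof -
  obtain m0 where m0: "\<forall>w w' :: nat \<Rightarrow> real. (\<forall>i<m0. w i = w' i) \<longrightarrow> dist w w' < e"
    using dist_agree[OF assms] by blast
  show ?thesis
  proof (intro exI[of _ m0] allI impI)
    fix d d' :: "nat \<Rightarrow> bool" and s assume a: "\<forall>j<m0. d j = d' j"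
    have "\<forall>i<m0. enc d s i = enc d' s i"
    proof (intro allI impI)
      fix i assume "i < m0" then show "enc d s i = enc d' s i" using a by (cases i) auto
    qed
    then show "dist (enc d s) (enc d' s) < e" using m0 by blast
  qed
qed

lemma reach2:
  assumes p: "inC p" and x: "inC x" and e: "0 < e"
  shows "\<exists>n\<ge>N0. Slev p (1/4) n = 1/4 \<and> dist (enc (padd p n) (1/4)) (enc x (1/4)) < e"
proof -
  obtain m0 where m0: "\<forall>d d' s. (\<forall>j<m0. d j = d' j) \<longrightarrow> dist (enc d s) (enc d' s) < e"
    using enc_close[OF e] by blast
  obtain m where m: "m mod 4 = 1" "m0 + N0 + 21 \<le> m" using m_choice by blast
  have "m - 7 + 8 \<le> (2::nat)^(m-7)" using m by (intro pow_big) simp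
  then have a0: "2 \<le> (2::nat)^(m-7)" and big: "N0 \<le> 2^(m-7)" using m by linarith+
  obtain n where n: "2^(m-7) \<le> n" "val m (padd p n) = val m x" "Slev p ((1/2)^2) n = 1/4"
    using reach[OF p x m(1) _ a0] m by auto
  have "\<forall>j<m0. padd p n j = x j"
  proof (intro allI impI)
    fix j assume "j < m0"
    then have "j < m" using m by simp
    then have "padd p n j = bit (val m (padd p n)) j" using bit_val by simp
    also have "\<dots> = bit (val m x) j" using n(2) by simp
    also have "\<dots> = x j" using bit_val \<open>j < m\<close> by simp
    finally show "padd p n j = x j" .
  qed
  then have "dist (enc (padd p n) (1/4)) (enc x (1/4)) < e" using m0 by blast
  moreover have "Slev p (1/4) n = 1/4" using n(3) by (simp add: power2_eq_square)
  moreover have "N0 \<le> n" using n(1) big by linarith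
  ultimately show ?thesis by blast
qed

lemma inY: "inC x \<Longrightarrow> enc x (1/4) \<in> Yset"
  unfolding Yset_def
proof (rule closure_approachable[THEN iffD2], intro allI impI)
  fix e :: real assume "inC x" "0 < e"
  obtain n where n: "Slev xstar (1/4) n = 1/4" "dist (enc (padd xstar n) (1/4)) (enc x (1/4)) < e"
    using reach2[OF inC_xstar \<open>inC x\<close> \<open>0 < e\<close>, of 0] by blast
  have "orb n = enc (padd xstar n) (1/4)" by (simp only: orb_eq n(1))
  moreover have "orb n \<in> range orb" by simp
  ultimately show "\<exists>y\<in>range orb. dist y (enc x (1/4)) < e" using n(2) by auto
qed

lemma recur: "0 < e \<Longrightarrow> \<exists>n\<ge>N0. dist (orb n) z0 < e"
proof -
  assume "0 < e"
  obtain n where n: "n \<ge> N0" "Slev xstar (1/4) n = 1/4" "dist (enc (padd xstar n) (1/4)) (enc xstar (1/4)) < e"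
    using reach2[OF inC_xstar inC_xstar \<open>0 < e\<close>] by blast
  have "orb n = enc (padd xstar n) (1/4)" by (simp only: orb_eq n(2))
  then have "dist (orb n) z0 < e" using n(3) unfolding z0_def by simp
  then show ?thesis using n(1) by blast
qed

lemma orb_add: "(gmap ^^ k) (orb a) = orb (k + a)"
  unfolding orb_def by (simp add: funpow_add)

lemma orb_Y: "orb n \<in> Yset"
proof -
  have "orb n \<in> range orb" by (rule rangeI)
  then show ?thesis unfolding Yset_def by (rule closure_subset[THEN subsetD])
qed

lemma open_meets_orb:
  assumes "open U'" "Yset \<inter> U' \<noteq> {}"
  shows "\<exists>a. orb a \<in> U'"
proof -
  have "U' \<inter> closure (range orb) \<noteq> {}" using assms(2) unfolding Yset_def by blast
  then have "U' \<inter> range orb \<noteq> {}" using open_Int_closure_eq_empty[OF assms(1)] by blast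
  then show ?thesis by blast
qed

lemma trans_Y: "transitive_sys Yset gmap"
  unfolding transitive_sys_def
proof (intro allI impI)
  fix U V assume h: "openin (top_of_set Yset) U \<and> openin (top_of_set Yset) V \<and> U \<noteq> {} \<and> V \<noteq> {}"
  obtain U' where U': "open U'" "U = Yset \<inter> U'" using h openin_open by metis
  obtain V' where V': "open V'" "V = Yset \<inter> V'" using h openin_open by metis
  obtain a where a: "orb a \<in> U'" using open_meets_orb[OF U'(1)] U'(2) h by blast
  obtain c where c: "orb c \<in> V'" using open_meets_orb[OF V'(1)] V'(2) h by blast
  obtain \<epsilon> where eps: "0 < \<epsilon>" "ball (orb c) \<epsilon> \<subseteq> V'" using V'(1) c openE by blast
  have "(gmap ^^ c) z0 = orb c" unfolding orb_def by simp
  then obtain \<delta> where del: "0 < \<delta>" "\<forall>x'\<in>Om. dist x' z0 < \<delta> \<longrightarrow> dist ((gmap ^^ c) x') (orb c) < \<epsilon>"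
    using cont_iter[of c] z0_Om eps(1) unfolding continuous_on_iff by metis
  obtain n where n: "n \<ge> Suc a" "dist (orb n) z0 < \<delta>" using recur[OF del(1)] by blast
  have "dist ((gmap ^^ c) (orb n)) (orb c) < \<epsilon>" using del(2) orb_Om n(2) by blast
  then have "orb (c + n) \<in> V'" using eps(2) orb_add[of c n] by (auto simp: dist_commute)
  then have inV: "orb (c + n) \<in> V" using V'(2) orb_Y by blast
  have inU: "orb a \<in> U" using U'(2) a orb_Y by blast
  define k where "k = c + n - a"
  have k: "0 < k" "k + a = c + n" unfolding k_def using n(1) by auto
  have "(gmap ^^ k) (orb a) \<in> V" using orb_add[of k a] k(2) inV by simp
  then have "orb a \<in> {x \<in> U. (gmap ^^ k) x \<in> V}" using inU by blast
  then show "\<exists>n>0. {x \<in> U. (gmap ^^ n) x \<in> V} \<noteq> {}" using k(1) by blast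
qed

lemma Om_iter: "w \<in> Om \<Longrightarrow> (gmap ^^ n) w = enc (padd (dec w) n) (Slev (dec w) (w 0) n)"
proof -
  assume "w \<in> Om"
  then have "w = enc (dec w) (w 0)" by (rule Om_enc)
  then have "(gmap ^^ n) w = (gmap ^^ n) (enc (dec w) (w 0))" by simp
  also have "\<dots> = enc (padd (dec w) n) (Slev (dec w) (w 0) n)" by (rule gmap_iter)
  finally show ?thesis .
qed

lemma enc_digit_dist:
  assumes "d j \<noteq> d' j"
  shows "(1/2)^(to_nat (Suc j)) \<le> dist (enc d s) (enc d' s')"
proof -
  have "dist (enc d s (Suc j)) (enc d' s' (Suc j)) = 1" using assms by (auto simp: dist_real_def)
  then show ?thesis using dist_lower[of "Suc j" "enc d s" "enc d' s'"] by simp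
qed

lemma K0_countable: "countable K0"
  unfolding K0_def by simp

lemma notLY_Y: "\<not> li_yorke_chaotic Yset gmap"
proof
  assume "li_yorke_chaotic Yset gmap"
  then obtain S where S: "scrambled Yset gmap S" "uncountable S" unfolding li_yorke_chaotic_def by blast
  have SY: "S \<subseteq> Yset" using S(1) unfolding scrambled_def by blast
  obtain w1 where w1: "w1 \<in> S" using S(1) unfolding scrambled_def by blast
  have same: "dec w = dec w1" if w: "w \<in> S" for w
  proof (rule ccontr)
    assume ne: "dec w \<noteq> dec w1"
    then have wne: "w \<noteq> w1" by blast
    have lim0: "liminf (\<lambda>n. ereal (dist ((gmap ^^ n) w) ((gmap ^^ n) w1))) = 0"
      using S(1) w w1 wne unfolding scrambled_def by blast
    obtain j0 where j0: "\<forall>i<j0. dec w i = dec w1 i" "dec w j0 \<noteq> dec w1 j0"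
      using lowdiff_exists[OF ne] by blast
    have wO: "w \<in> Om" "w1 \<in> Om" using SY w w1 Y_Om by blast+
    have bnd: "ereal ((1/2)^(to_nat (Suc j0))) \<le> ereal (dist ((gmap ^^ n) w) ((gmap ^^ n) w1))" for n
    proof -
      have "padd (dec w) n j0 \<noteq> padd (dec w1) n j0" using padd_lowdiff[OF j0] by blast
      then have "(1/2)^(to_nat (Suc j0)) \<le> dist (enc (padd (dec w) n) (Slev (dec w) (w 0) n)) (enc (padd (dec w1) n) (Slev (dec w1) (w1 0) n))"
        by (rule enc_digit_dist)
      then show ?thesis using Om_iter[OF wO(1)] Om_iter[OF wO(2)] by simp
    qed
    have "ereal ((1/2)^(to_nat (Suc j0))) \<le> liminf (\<lambda>n. ereal (dist ((gmap ^^ n) w) ((gmap ^^ n) w1)))"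
      using bnd by (intro Liminf_bounded) simp
    moreover have "(0::real) < (1/2)^(to_nat (Suc j0))" by simp
    ultimately show False using lim0 by simp
  qed
  have "S \<subseteq> (\<lambda>s. enc (dec w1) s) ` K0"
  proof
    fix w assume w: "w \<in> S"
    then have wO: "w \<in> Om" using SY Y_Om by blast
    then have "w = enc (dec w) (w 0)" by (rule Om_enc)
    then have "w = enc (dec w1) (w 0)" using same[OF w] by simp
    moreover have "w 0 \<in> K0" using wO by (simp add: Om_def)
    ultimately show "w \<in> (\<lambda>s. enc (dec w1) s) ` K0" by blast
  qed
  moreover have "countable ((\<lambda>s. enc (dec w1) s) ` K0)" using K0_countable by simp
  ultimately have "countable S" by (rule countable_subset)
  then show False using S(2) by simp
qed

definition phi :: "(nat \<Rightarrow> real) \<Rightarrow> nat \<Rightarrow> real" where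
  "phi w = (\<lambda>i. w 0 * (case i of 0 \<Rightarrow> 1 | Suc j \<Rightarrow> w i))"

definition psi :: "(nat \<Rightarrow> real) \<Rightarrow> nat \<Rightarrow> real" where
  "psi v = (\<lambda>i. case i of 0 \<Rightarrow> v 0 | Suc j \<Rightarrow> (if v 0 = 0 then 0 else v i / v 0))"

definition fmap :: "(nat \<Rightarrow> real) \<Rightarrow> nat \<Rightarrow> real" where
  "fmap v = phi (gmap (psi v))"

definition Xset :: "(nat \<Rightarrow> real) set" where "Xset = phi ` Yset"

lemma phi_0 [simp]: "phi w 0 = w 0" by (simp add: phi_def)
lemma phi_Suc [simp]: "phi w (Suc j) = w 0 * w (Suc j)" by (simp add: phi_def)

lemma cont_phi: "continuous_on S phi"
proof (rule continuous_on_coordinatewise_then_product)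
  fix i
  show "continuous_on S (\<lambda>w. phi w i)"
  proof (cases i)
    case 0
    have "continuous_on S (\<lambda>w. w 0 :: real)"
      by (rule continuous_on_subset[OF continuous_on_product_coordinates]) simp
    then show ?thesis using 0 by simp
  next
    case (Suc j)
    have "continuous_on S (\<lambda>w. (w 0 :: real) * w (Suc j))"
      by (intro continuous_intros continuous_on_subset[OF continuous_on_product_coordinates]) simp_all
    then show ?thesis using Suc by simp
  qed
qed

lemma gmap_zero0: "w 0 = 0 \<Longrightarrow> gmap w 0 = 0"
  using hk_nonneg[of "dec w"] by (simp add: gmap_def)

lemma phi_zero: "w 0 = 0 \<Longrightarrow> phi w = (\<lambda>i. 0)"
  by (simp add: phi_def)

lemma fmap_phi: "fmap (phi w) = phi (gmap w)"
proof (cases "w 0 = 0")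
  case True
  have z: "phi w = (\<lambda>i. 0)" using True by (rule phi_zero)
  have "psi (\<lambda>i. 0) = (\<lambda>i. 0)"
  proof
    fix i show "psi (\<lambda>i. 0) i = 0" by (cases i) (simp_all add: psi_def)
  qed
  then have "fmap (phi w) = phi (gmap (\<lambda>i. 0))" using z by (simp add: fmap_def)
  also have "\<dots> = (\<lambda>i. 0)" by (rule phi_zero) (simp add: gmap_zero0)
  also have "\<dots> = phi (gmap w)" using gmap_zero0[of w, OF True] by (simp add: phi_zero)
  finally show ?thesis .
next
  case False
  have "psi (phi w) = w"
  proof
    fix i show "psi (phi w) i = w i" using False by (cases i) (simp_all add: psi_def)
  qed
  then show ?thesis by (simp add: fmap_def)
qed

lemma fmap_iter: "(fmap ^^ n) (phi w) = phi ((gmap ^^ n) w)"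
proof (induction n)
  case 0 then show ?case by simp
next
  case (Suc n) then show ?case by (simp add: fmap_phi)
qed

lemma X_compact: "compact Xset"
  unfolding Xset_def by (intro compact_continuous_image cont_phi Y_compact)

lemma fmap_X: "fmap ` Xset \<subseteq> Xset"
proof
  fix v assume "v \<in> fmap ` Xset"
  then obtain w where w: "w \<in> Yset" "v = fmap (phi w)" unfolding Xset_def by blast
  then have "v = phi (gmap w)" by (simp add: fmap_phi)
  moreover have "gmap w \<in> Yset" using gmap_Y w(1) by blast
  ultimately show "v \<in> Xset" unfolding Xset_def by blast
qed

lemma cont_fmap: "continuous_on Xset fmap"
  unfolding continuous_on_closed
proof (intro allI impI)
  fix T assume "closedin (top_of_set (fmap ` Xset)) T"
  then obtain T' where T': "closed T'" "T = fmap ` Xset \<inter> T'" by (auto simp: closedin_closed)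
  define C where "C = Yset \<inter> (phi \<circ> gmap) -` T'"
  have cphig: "continuous_on Yset (phi \<circ> gmap)"
    by (intro continuous_on_compose continuous_on_subset[OF cont_gmap Y_Om] cont_phi)
  have "closed C" unfolding C_def
    using continuous_closed_preimage[OF cphig compact_imp_closed[OF Y_compact] T'(1)] .
  then have "compact (Yset \<inter> C)" by (intro compact_Int_closed Y_compact)
  moreover have "Yset \<inter> C = C" unfolding C_def by blast
  ultimately have "compact C" by simp
  then have "compact (phi ` C)" by (rule compact_continuous_image[OF cont_phi])
  then have cl: "closed (phi ` C)" by (rule compact_imp_closed)
  have eq: "Xset \<inter> fmap -` T = phi ` C"
  proof
    show "Xset \<inter> fmap -` T \<subseteq> phi ` C"
    proof
      fix v assume v: "v \<in> Xset \<inter> fmap -` T"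
      then obtain w where w: "w \<in> Yset" "v = phi w" unfolding Xset_def by blast
      have "fmap v \<in> T'" using v T'(2) by blast
      then have "phi (gmap w) \<in> T'" using w(2) fmap_phi by simp
      then have "w \<in> C" unfolding C_def using w(1) by simp
      then show "v \<in> phi ` C" using w(2) by blast
    qed
  next
    show "phi ` C \<subseteq> Xset \<inter> fmap -` T"
    proof
      fix v assume "v \<in> phi ` C"
      then obtain w where w: "w \<in> Yset" "phi (gmap w) \<in> T'" "v = phi w" unfolding C_def by auto
      have vX: "v \<in> Xset" unfolding Xset_def using w by blast
      have "fmap v \<in> T'" using w fmap_phi by simp
      moreover have "fmap v \<in> fmap ` Xset" using vX by blast
      ultimately show "v \<in> Xset \<inter> fmap -` T" using vX T'(2) by blast
    qed
  qed
  have "phi ` C \<subseteq> Xset" using eq by blast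
  then show "closedin (top_of_set Xset) (Xset \<inter> fmap -` T)" unfolding eq using cl
    by (simp add: closed_subset)
qed

lemma dyn_X: "dyn_system Xset fmap"
  unfolding dyn_system_def using X_compact cont_fmap fmap_X by blast

lemma dyn_Y: "dyn_system Yset gmap"
  unfolding dyn_system_def using Y_compact continuous_on_subset[OF cont_gmap Y_Om] gmap_Y by blast

lemma factor: "factor_map Yset gmap Xset fmap phi"
  unfolding factor_map_def Xset_def using cont_phi fmap_phi by simp

lemma trans_X: "transitive_sys Xset fmap"
  unfolding transitive_sys_def
proof (intro allI impI)
  fix U V assume h: "openin (top_of_set Xset) U \<and> openin (top_of_set Xset) V \<and> U \<noteq> {} \<and> V \<noteq> {}"
  obtain U' where U': "open U'" "U = Xset \<inter> U'" using h openin_open by metis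
  obtain V' where V': "open V'" "V = Xset \<inter> V'" using h openin_open by metis
  have oU: "open (phi -` U')" using U'(1) cont_phi by (intro open_vimage) auto
  have oV: "open (phi -` V')" using V'(1) cont_phi by (intro open_vimage) auto
  have U0: "openin (top_of_set Yset) (Yset \<inter> phi -` U')" using oU openin_open by blast
  have V0: "openin (top_of_set Yset) (Yset \<inter> phi -` V')" using oV openin_open by blast
  have U0n: "Yset \<inter> phi -` U' \<noteq> {}"
  proof -
    obtain v where "v \<in> U" using h by blast
    then obtain w where "w \<in> Yset" "phi w \<in> U'" using U'(2) unfolding Xset_def by blast
    then show ?thesis by blast
  qed
  have V0n: "Yset \<inter> phi -` V' \<noteq> {}"
  proof -
    obtain v where "v \<in> V" using h by blast
    then obtain w where "w \<in> Yset" "phi w \<in> V'" using V'(2) unfolding Xset_def by blast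
    then show ?thesis by blast
  qed
  have "\<exists>n>0. {x \<in> Yset \<inter> phi -` U'. (gmap ^^ n) x \<in> Yset \<inter> phi -` V'} \<noteq> {}"
    using trans_Y[unfolded transitive_sys_def, rule_format, of "Yset \<inter> phi -` U'" "Yset \<inter> phi -` V'"] U0 V0 U0n V0n
    by blast
  then obtain n w where n: "0 < n" "w \<in> Yset \<inter> phi -` U'" "(gmap ^^ n) w \<in> Yset \<inter> phi -` V'"
    by blast
  have "phi w \<in> U" using n(2) U'(2) unfolding Xset_def by blast
  moreover have "(fmap ^^ n) (phi w) \<in> V"
    using n(3) V'(2) fmap_iter[of n w] unfolding Xset_def by auto
  ultimately show "\<exists>n>0. {x \<in> U. (fmap ^^ n) x \<in> V} \<noteq> {}" using n(1) by blast
qed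

definition emb :: "(nat \<Rightarrow> bool) \<Rightarrow> nat \<Rightarrow> bool" where
  "emb b = (\<lambda>j. (10 \<le> j \<and> j mod 8 = 2) \<or> (14 \<le> j \<and> j mod 8 = 6 \<and> b (j div 8 - 1)))"

lemma inC_emb: "inC (emb b)"
proof -
  have "\<forall>j. (emb b j \<longrightarrow> 10 \<le> j \<and> (j mod 8 = 2 \<or> j mod 8 = 6)) \<and> (10 \<le> j \<and> j mod 8 = 2 \<longrightarrow> emb b j)"
  proof
    fix j
    show "(emb b j \<longrightarrow> 10 \<le> j \<and> (j mod 8 = 2 \<or> j mod 8 = 6)) \<and> (10 \<le> j \<and> j mod 8 = 2 \<longrightarrow> emb b j)"
      unfolding emb_def by auto
  qed
  then show ?thesis unfolding inC_def .
qed

lemma m14a: "(8 * k + 14) mod 8 = (6::nat)" by presburger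
lemma m14b: "(8 * k + 14) div 8 = (k + 1::nat)" by presburger

lemma emb_at: "emb b (8 * k + 14) = b k"
proof -
  have "\<not> ((8 * k + 14) mod 8 = (2::nat))" using m14a[of k] by simp
  then show ?thesis unfolding emb_def using m14a[of k] m14b[of k] by simp
qed

lemma inj_emb: "inj emb"
proof (rule injI)
  fix b b' assume "emb b = emb b'"
  then have "\<And>k. emb b (8 * k + 14) = emb b' (8 * k + 14)" by simp
  then show "b = b'" using emb_at by auto
qed

lemma uncountable_bool_seq: "uncountable (UNIV :: (nat \<Rightarrow> bool) set)"
proof
  assume "countable (UNIV :: (nat \<Rightarrow> bool) set)"
  then obtain f :: "nat \<Rightarrow> (nat \<Rightarrow> bool)" where f: "range f = UNIV"
    using uncountable_def by blast
  define g where "g = (\<lambda>k. \<not> f k k)"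
  have "g \<in> range f" using f by simp
  then obtain k where "g = f k" by blast
  then have "g k = f k k" by simp
  then show False unfolding g_def by simp
qed

definition Cset :: "(nat \<Rightarrow> bool) set" where "Cset = {x. inC x}"

lemma Cset_uncountable: "uncountable Cset"
proof
  assume "countable Cset"
  moreover have "range emb \<subseteq> Cset" unfolding Cset_def using inC_emb by blast
  ultimately have "countable (range emb)" by (rule countable_subset[rotated])
  then have "countable (UNIV :: (nat \<Rightarrow> bool) set)" using inj_emb by (rule countable_image_inj_on)
  then show False using uncountable_bool_seq by simp
qed

definition pt :: "(nat \<Rightarrow> bool) \<Rightarrow> nat \<Rightarrow> real" where "pt x = phi (enc x (1/4))"

lemma pt_Suc: "pt x (Suc j) = (if x j then 1/4 else 0)"
  by (simp add: pt_def)

lemma inj_pt: "inj pt"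
proof (rule injI)
  fix x x' assume "pt x = pt x'"
  then have "\<And>j. pt x (Suc j) = pt x' (Suc j)" by simp
  then have "\<And>j. x j = x' j" unfolding pt_Suc by (metis zero_neq_numeral divide_eq_0_iff one_neq_zero)
  then show "x = x'" by blast
qed

lemma K0_gap: "s \<in> K0 \<Longrightarrow> s \<noteq> 1/4 \<Longrightarrow> 1/8 \<le> \<bar>1/4 - s\<bar>"
proof -
  assume s: "s \<in> K0" "s \<noteq> 1/4"
  show ?thesis
  proof (cases "s = 0")
    case True then show ?thesis by simp
  next
    case False
    then obtain k where k: "s = (1/2)^(Suc k)" using s(1) by (auto simp: K0_def)
    show ?thesis
    proof (cases k)
      case 0 then show ?thesis using k by simp
    next
      case (Suc k')
      show ?thesis
      proof (cases k')
        case 0 then show ?thesis using k Suc s(2) by (simp add: power2_eq_square)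
      next
        case (Suc k'')
        then have "s = (1/2)^(Suc (Suc (Suc k'')))" using k \<open>k = Suc k'\<close> by simp
        then have se: "s = (1/8) * (1/2)^k''" by (simp add: power_add[symmetric] eval_nat_numeral)
        have "(1/2::real)^k'' \<le> 1" by (simp add: power_le_one)
        then have "(1/8) * (1/2::real)^k'' \<le> 1/8" by simp
        then have "s \<le> 1/8" using se by simp
        moreover have "0 \<le> s" using s(1) by (rule K0_nonneg)
        ultimately show ?thesis by simp
      qed
    qed
  qed
qed

lemma pt_iter: "(fmap ^^ n) (pt x) = phi (enc (padd x n) (Slev x (1/4) n))"
  unfolding pt_def fmap_iter gmap_iter ..

lemma coord_bound:
  assumes "0 \<le> s" "s \<le> \<delta>" "0 \<le> s'" "s' \<le> \<delta>"
  shows "dist (phi (enc d s) i) (phi (enc d' s') i) \<le> \<delta>"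
proof (cases i)
  case 0 then show ?thesis using assms by (simp add: dist_real_def)
next
  case (Suc j) then show ?thesis using assms by (auto simp: dist_real_def)
qed

lemma Slev_nonneg: "0 \<le> Slev x (1/4) n"
  using K0_nonneg[OF Slev_K0[OF quarter_K0]] .

lemma liminf0:
  assumes x: "inC x" and x': "inC x'"
  shows "liminf (\<lambda>n. ereal (dist ((fmap ^^ n) (pt x)) ((fmap ^^ n) (pt x')))) = 0"
    (is "liminf ?u = 0")
proof (rule antisym)
  show "0 \<le> liminf ?u" by (intro Liminf_bounded) simp
  show "liminf ?u \<le> 0"
  proof (rule ereal_le_epsilon2)
    fix e :: real assume e: "0 < e"
    show "liminf ?u \<le> 0 + ereal e"
    proof (rule ccontr)
      assume "\<not> liminf ?u \<le> 0 + ereal e"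
      then have "ereal e < liminf ?u" by simp
      then have "eventually (\<lambda>n. ereal e < ?u n) sequentially" by (rule less_LiminfD)
      then obtain N0 where N0: "\<And>n. N0 \<le> n \<Longrightarrow> ereal e < ?u n" by (auto simp: eventually_sequentially)
      obtain N1 where N1: "(1/2::real)^N1 < e/3" using real_arch_pow_inv[of "e/3" "1/2"] e by auto
      define H where "H = N1 + N0 + 1"
      have H1: "1 \<le> H" unfolding H_def by simp
      have "N0 \<le> 4*H+4" unfolding H_def by simp
      also have "4*H+4 < (2::nat)^(4*H+4)" by (rule less_exp)
      also have "\<dots> \<le> NH H" by (rule NH_big[OF H1])
      finally have nbig: "N0 \<le> Suc (NH H)" by simp
      let ?n = "Suc (NH H)"
      define \<delta> where "\<delta> = (1/2::real)^(H+1)"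
      have s1: "Slev x (1/4) ?n \<le> \<delta>" unfolding \<delta>_def by (rule window[OF x H1])
      have s2: "Slev x' (1/4) ?n \<le> \<delta>" unfolding \<delta>_def by (rule window[OF x' H1])
      have "dist (phi (enc (padd x ?n) (Slev x (1/4) ?n))) (phi (enc (padd x' ?n) (Slev x' (1/4) ?n))) \<le> 2 * \<delta> + (1/2)^(H+1)"
        by (rule dist_upper, rule coord_bound[OF Slev_nonneg s1 Slev_nonneg s2])
      also have "\<dots> = 3 * \<delta>" unfolding \<delta>_def by simp
      also have "\<delta> \<le> (1/2)^N1" unfolding \<delta>_def H_def by (intro power_decreasing) auto
      then have "3 * \<delta> < e" using N1 by linarith
      finally have "?u ?n < ereal e" unfolding pt_iter by simp
      then show False using N0[OF nbig] by simp
    qed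
  qed
qed

lemma limsup_pos:
  assumes x: "inC x" and x': "inC x'" and ne: "x \<noteq> x'"
  shows "0 < limsup (\<lambda>n. ereal (dist ((fmap ^^ n) (pt x)) ((fmap ^^ n) (pt x'))))"
    (is "0 < limsup ?u")
proof -
  obtain j0 where j0: "\<forall>i<j0. x i = x' i" "x j0 \<noteq> x' j0" using lowdiff_exists[OF ne] by blast
  define c where "c = min ((1/2)^(to_nat (0::nat)) * (1/8)) ((1/2)^(to_nat (Suc j0)) * (1/4::real))"
  have c0: "0 < c" unfolding c_def by simp
  have big: "c \<le> dist ((fmap ^^ n) (pt x)) ((fmap ^^ n) (pt x'))" if n: "Slev x (1/4) n = 1/4" for n
  proof -
    let ?s' = "Slev x' (1/4) n"
    have eq: "dist ((fmap ^^ n) (pt x)) ((fmap ^^ n) (pt x')) = dist (phi (enc (padd x n) (1/4))) (phi (enc (padd x' n) ?s'))"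
      unfolding pt_iter n ..
    show ?thesis
    proof (cases "?s' = 1/4")
      case False
      have "?s' \<in> K0" by (rule Slev_K0[OF quarter_K0])
      then have g: "1/8 \<le> \<bar>1/4 - ?s'\<bar>" using False by (rule K0_gap)
      have "(1/2)^(to_nat (0::nat)) * min (dist (phi (enc (padd x n) (1/4)) 0) (phi (enc (padd x' n) ?s') 0)) 1
          \<le> dist (phi (enc (padd x n) (1/4))) (phi (enc (padd x' n) ?s'))" by (rule dist_lower)
      moreover have "1/8 \<le> min (dist (phi (enc (padd x n) (1/4)) 0) (phi (enc (padd x' n) ?s') 0)) 1"
        using g by (simp add: dist_real_def)
      moreover have "(1/2::real)^(to_nat (0::nat)) * (1/8) \<le> (1/2)^(to_nat (0::nat)) * min (dist (phi (enc (padd x n) (1/4)) 0) (phi (enc (padd x' n) ?s') 0)) 1"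
        using \<open>1/8 \<le> min (dist (phi (enc (padd x n) (1/4)) 0) (phi (enc (padd x' n) ?s') 0)) 1\<close>
        by (rule mult_left_mono) simp
      ultimately have "(1/2)^(to_nat (0::nat)) * (1/8) \<le> dist (phi (enc (padd x n) (1/4))) (phi (enc (padd x' n) ?s'))"
        by linarith
      then show ?thesis unfolding eq c_def by linarith
    next
      case True
      have dj: "padd x n j0 \<noteq> padd x' n j0" using padd_lowdiff[OF j0] by blast
      have L: "(1/2)^(to_nat (Suc j0)) * min (dist (phi (enc (padd x n) (1/4)) (Suc j0)) (phi (enc (padd x' n) ?s') (Suc j0))) 1
          \<le> dist (phi (enc (padd x n) (1/4))) (phi (enc (padd x' n) ?s'))" by (rule dist_lower)
      have E: "min (dist (phi (enc (padd x n) (1/4)) (Suc j0)) (phi (enc (padd x' n) ?s') (Suc j0))) 1 = 1/4"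
      proof -
        have "phi (enc (padd x' n) ?s') (Suc j0) = 1/4 * (if padd x' n j0 then 1 else 0)"
          unfolding True by simp
        moreover have "phi (enc (padd x n) (1/4)) (Suc j0) = 1/4 * (if padd x n j0 then 1 else 0)" by simp
        ultimately show ?thesis using dj by (cases "padd x n j0") (simp_all add: dist_real_def)
      qed
      have "(1/2)^(to_nat (Suc j0)) * (1/4) \<le> dist (phi (enc (padd x n) (1/4))) (phi (enc (padd x' n) ?s'))"
        using L unfolding E .
      then show ?thesis unfolding eq c_def by linarith
    qed
  qed
  have "ereal c \<le> limsup ?u"
  proof (rule ccontr)
    assume "\<not> ereal c \<le> limsup ?u"
    then have "limsup ?u < ereal c" by simp
    then have "eventually (\<lambda>n. ?u n < ereal c) sequentially" by (rule Limsup_lessD)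
    then obtain N0 where N0: "\<And>n. N0 \<le> n \<Longrightarrow> ?u n < ereal c" by (auto simp: eventually_sequentially)
    obtain n where n: "n \<ge> N0" "Slev x (1/4) n = 1/4"
      using reach2[OF x x zero_less_one, of N0] by blast
    have "ereal c \<le> ?u n" using big[OF n(2)] by simp
    then show False using N0[OF n(1)] by simp
  qed
  moreover have "0 < ereal c" using c0 by simp
  ultimately show ?thesis by (rule order.strict_trans2[rotated])
qed

lemma LY_X: "li_yorke_chaotic Xset fmap"
proof -
  define S where "S = pt ` Cset"
  have Sub: "S \<subseteq> Xset" unfolding S_def Xset_def pt_def Cset_def using inY by blast
  have Two: "\<exists>x y. x \<in> S \<and> y \<in> S \<and> x \<noteq> y"
  proof -
    have e1: "emb (\<lambda>_. False) \<in> Cset" "emb (\<lambda>_. True) \<in> Cset" unfolding Cset_def using inC_emb by blast+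
    have "emb (\<lambda>_. False) \<noteq> emb (\<lambda>_. True)" using emb_at[of "\<lambda>_. False" 0] emb_at[of "\<lambda>_. True" 0] by metis
    then have "pt (emb (\<lambda>_. False)) \<noteq> pt (emb (\<lambda>_. True))" using inj_pt by (metis injD)
    then show ?thesis using e1 unfolding S_def by blast
  qed
  have Pairs: "\<forall>a\<in>S. \<forall>b\<in>S. a \<noteq> b \<longrightarrow>
      liminf (\<lambda>n. ereal (dist ((fmap ^^ n) a) ((fmap ^^ n) b))) = 0 \<and>
      limsup (\<lambda>n. ereal (dist ((fmap ^^ n) a) ((fmap ^^ n) b))) > 0"
  proof (intro ballI impI)
    fix a b assume ab: "a \<in> S" "b \<in> S" "a \<noteq> b"
    then obtain x x' where xx: "x \<in> Cset" "x' \<in> Cset" "a = pt x" "b = pt x'" unfolding S_def by blast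
    then have ne: "x \<noteq> x'" using ab(3) by blast
    have ix: "inC x" "inC x'" using xx unfolding Cset_def by auto
    show "liminf (\<lambda>n. ereal (dist ((fmap ^^ n) a) ((fmap ^^ n) b))) = 0 \<and>
          limsup (\<lambda>n. ereal (dist ((fmap ^^ n) a) ((fmap ^^ n) b))) > 0"
      unfolding xx(3,4) using liminf0[OF ix] limsup_pos[OF ix ne] by blast
  qed
  have "scrambled Xset fmap S" unfolding scrambled_def using Sub Two Pairs by blast
  moreover have "uncountable S"
  proof
    assume "countable S"
    then have "countable Cset" unfolding S_def
      by (rule countable_image_inj_on) (use inj_pt in \<open>simp add: inj_on_def inj_def\<close>)
    then show False using Cset_uncountable by simp
  qed
  ultimately show ?thesis unfolding li_yorke_chaotic_def by blast
qed

theorem mainTheorem1: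
  shows "\<exists>(Y::(nat \<Rightarrow> real) set) g (X::(nat \<Rightarrow> real) set) f \<phi>.
           dyn_system Y g \<and> dyn_system X f \<and> factor_map Y g X f \<phi> \<and>
           transitive_sys Y g \<and> transitive_sys X f \<and>
           li_yorke_chaotic X f \<and> \<not> li_yorke_chaotic Y g"
  using dyn_Y dyn_X factor trans_Y trans_X LY_X notLY_Y by blast

end
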